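(* Let $P$ be a poset whose vertex set $V$ is a finite subset of $\mathbb{Z}_{>0}$ (with order $\prec$ unrelated to the integer order). Let $D(P)$ be the digraph on $V$ with an edge $u\to v$ iff $v\prec u$, and let $G(P)$ be the incomparability graph of $P$. Then $\Xi_{D(P)}(\mathbf{x},t)=X_{G(P)}(\mathbf{x},t)$.
   Context: $X_G(\mathbf{x},t)=\sum_\kappa t^{\mathrm{asc}(\kappa)}\prod_v x_{\kappa(v)}$ over proper colorings $\kappa:V\to\mathbb{Z}_{>0}$, with $\mathrm{asc}(\kappa)$ the number of edges $\{u,v\}$, $u<v$, $\kappa(u)<\kappa(v)$. The incomparability graph joins two distinct vertices iff they are incomparable in $P$. For a digraph $D$ on $V$ with $n=|V|$: a sequencing is a bijection $q:[n]\to V$; for a composition $\beta=(\beta_1,\dots,\beta_\ell)$ of $n$ put $B_i=\beta_1+\cdots+\beta_i$, $B_0=0$. An ordered path cover is a pair $(q,\beta)$ such that $q(B_{i-1}+1)\to\cdots\to q(B_i)$ is a directed path in $D$ for every $i$. $\mathrm{asc}(q)$ is the number of pairs $\{u,v\}$ with (1) either both $u\to v$ and $v\to u$ are edges or neither is, (2) $u<v$, (3) $v$ appears later than $u$ in $q$. $\Xi_D(\mathbf{x},t)=\sum_{(q,\beta)}t^{\mathrm{asc}(q)}M_\beta$ over ordered path covers, where $M_\beta=\sum_{i_1<\cdots<i_\ell}x_{i_1}^{\beta_1}\cdots x_{i_\ell}^{\beta_\ell}$. *)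

theory Defs
  imports "HOL-Computational_Algebra.Polynomial"
begin

text \<open>Formal power series in x = (x_1, x_2, ...) with coefficients in Z[t] are represented
  by their coefficient function: a monomial x^alpha is given by its exponent function
  alpha :: nat => nat (alpha c = exponent of x_c), and the coefficient is an int poly in t.\<close>

text \<open>Colourings kappa : V -> Z_{>0} are functions nat => nat that are positive on V
  and 0 outside V.\<close>

definition proper_colorings :: "nat set \<Rightarrow> (nat \<Rightarrow> nat \<Rightarrow> bool) \<Rightarrow> (nat \<Rightarrow> nat) set" where
  "proper_colorings V adj =
     {\<kappa>. (\<forall>v\<in>V. \<kappa> v > 0) \<and> (\<forall>v. v \<notin> V \<longrightarrow> \<kappa> v = 0)
         \<and> (\<forall>u\<in>V. \<forall>v\<in>V. adj u v \<longrightarrow> \<kappa> u \<noteq> \<kappa> v)}"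

definition col_asc :: "nat set \<Rightarrow> (nat \<Rightarrow> nat \<Rightarrow> bool) \<Rightarrow> (nat \<Rightarrow> nat) \<Rightarrow> nat" where
  "col_asc V adj \<kappa> = card {(u, v). u \<in> V \<and> v \<in> V \<and> adj u v \<and> u < v \<and> \<kappa> u < \<kappa> v}"

text \<open>The monomial prod_{v in V} x_{kappa v} has exponent function c |-> #(kappa^{-1}(c)).\<close>
definition col_monomial :: "nat set \<Rightarrow> (nat \<Rightarrow> nat) \<Rightarrow> (nat \<Rightarrow> nat)" where
  "col_monomial V \<kappa> = (\<lambda>c. card {v \<in> V. \<kappa> v = c})"

definition X_coeff :: "nat set \<Rightarrow> (nat \<Rightarrow> nat \<Rightarrow> bool) \<Rightarrow> (nat \<Rightarrow> nat) \<Rightarrow> int poly" where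
  "X_coeff V adj \<alpha> =
     (\<Sum>\<kappa> \<in> {\<kappa> \<in> proper_colorings V adj. col_monomial V \<kappa> = \<alpha>}. monom 1 (col_asc V adj \<kappa>))"

text \<open>A sequencing q : [n] -> V is a list qs with distinct entries and set qs = V
  (q(m) = qs ! (m-1)); a composition beta of n is a list of positive naturals with sum n.\<close>

definition sequencings :: "nat set \<Rightarrow> nat list set" where
  "sequencings V = {qs. distinct qs \<and> set qs = V}"

definition compositions :: "nat \<Rightarrow> nat list set" where
  "compositions n = {\<beta>. sum_list \<beta> = n \<and> (\<forall>b \<in> set \<beta>. 0 < b)}"

text \<open>B_i = beta_1 + ... + beta_i (0-based: B i = sum of first i parts).\<close>
definition partial_sum :: "nat list \<Rightarrow> nat \<Rightarrow> nat" where
  "partial_sum \<beta> i = sum_list (take i \<beta>)"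

definition is_ordered_path_cover :: "(nat \<Rightarrow> nat \<Rightarrow> bool) \<Rightarrow> nat list \<Rightarrow> nat list \<Rightarrow> bool" where
  "is_ordered_path_cover E qs \<beta> =
     (\<forall>i < length \<beta>. \<forall>m. partial_sum \<beta> i \<le> m \<and> Suc m < partial_sum \<beta> (Suc i)
         \<longrightarrow> E (qs ! m) (qs ! Suc m))"

definition ordered_path_covers :: "nat set \<Rightarrow> (nat \<Rightarrow> nat \<Rightarrow> bool) \<Rightarrow> (nat list \<times> nat list) set" where
  "ordered_path_covers V E =
     {(qs, \<beta>). qs \<in> sequencings V \<and> \<beta> \<in> compositions (card V) \<and> is_ordered_path_cover E qs \<beta>}"

definition seq_asc :: "nat set \<Rightarrow> (nat \<Rightarrow> nat \<Rightarrow> bool) \<Rightarrow> nat list \<Rightarrow> nat" where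
  "seq_asc V E qs = card {(u, v). u \<in> V \<and> v \<in> V \<and> (E u v \<longleftrightarrow> E v u) \<and> u < v \<and>
       (\<exists>i j. i < j \<and> j < length qs \<and> qs ! i = u \<and> qs ! j = v)}"

text \<open>Coefficient of x^alpha in the monomial quasisymmetric function M_beta:
  number of strictly increasing i_1 < ... < i_l in Z_{>0} with
  x_{i_1}^{beta_1} ... x_{i_l}^{beta_l} = x^alpha.\<close>
definition M_coeff :: "nat list \<Rightarrow> (nat \<Rightarrow> nat) \<Rightarrow> nat" where
  "M_coeff \<beta> \<alpha> = card {is :: nat list. length is = length \<beta> \<and> sorted_wrt (<) is \<and>
       (\<forall>j \<in> set is. 0 < j) \<and>
       \<alpha> = (\<lambda>c. \<Sum>j < length \<beta>. if is ! j = c then \<beta> ! j else 0)}"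

definition Xi_coeff :: "nat set \<Rightarrow> (nat \<Rightarrow> nat \<Rightarrow> bool) \<Rightarrow> (nat \<Rightarrow> nat) \<Rightarrow> int poly" where
  "Xi_coeff V E \<alpha> =
     (\<Sum>(qs, \<beta>) \<in> ordered_path_covers V E. of_nat (M_coeff \<beta> \<alpha>) * monom 1 (seq_asc V E qs))"

text \<open>The poset P on V is given by its strict order prec (x prec y).\<close>
definition poset_digraph :: "nat set \<Rightarrow> (nat \<Rightarrow> nat \<Rightarrow> bool) \<Rightarrow> nat \<Rightarrow> nat \<Rightarrow> bool" where
  "poset_digraph V prec u v = (u \<in> V \<and> v \<in> V \<and> prec v u)"

definition incomparability_graph :: "nat set \<Rightarrow> (nat \<Rightarrow> nat \<Rightarrow> bool) \<Rightarrow> nat \<Rightarrow> nat \<Rightarrow> bool" where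
  "incomparability_graph V prec u v =
     (u \<in> V \<and> v \<in> V \<and> u \<noteq> v \<and> \<not> prec u v \<and> \<not> prec v u)"

end

theory Submission
  imports Defs
begin


definition blk :: "nat list \<Rightarrow> nat \<Rightarrow> nat" where
  "blk \<beta> m = card {i. i < length \<beta> \<and> partial_sum \<beta> (Suc i) \<le> m}"

lemma ps_Suc: "i < length \<beta> \<Longrightarrow> partial_sum \<beta> (Suc i) = partial_sum \<beta> i + \<beta> ! i"
  by (simp add: partial_sum_def take_Suc_conv_app_nth)

lemma ps_ge_len: "length \<beta> \<le> i \<Longrightarrow> partial_sum \<beta> i = sum_list \<beta>"
  by (simp add: partial_sum_def)

lemma ps_mono: "i \<le> j \<Longrightarrow> partial_sum \<beta> i \<le> partial_sum \<beta> j"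
proof (induction j)
  case 0 then show ?case by simp
next
  case (Suc j)
  show ?case
  proof (cases "i = Suc j")
    case False
    then have "partial_sum \<beta> i \<le> partial_sum \<beta> j" using Suc by simp
    also have "\<dots> \<le> partial_sum \<beta> (Suc j)"
      by (cases "j < length \<beta>") (auto simp: ps_Suc ps_ge_len)
    finally show ?thesis .
  qed simp
qed

lemma ps_le_sum: "partial_sum \<beta> i \<le> sum_list \<beta>"
  by (metis nat_le_linear ps_ge_len ps_mono)

lemma ps_strict: "\<forall>b\<in>set \<beta>. 0 < b \<Longrightarrow> i < length \<beta> \<Longrightarrow> partial_sum \<beta> i < partial_sum \<beta> (Suc i)"
  by (simp add: ps_Suc)

lemma blk_char:
  assumes pos: "\<forall>b\<in>set \<beta>. 0 < b" and i: "i < length \<beta>"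
    and m: "partial_sum \<beta> i \<le> m" "m < partial_sum \<beta> (Suc i)"
  shows "blk \<beta> m = i"
proof -
  have "{i'. i' < length \<beta> \<and> partial_sum \<beta> (Suc i') \<le> m} = {..<i}"
  proof (intro set_eqI iffI)
    fix x assume "x \<in> {i'. i' < length \<beta> \<and> partial_sum \<beta> (Suc i') \<le> m}"
    then have "partial_sum \<beta> (Suc x) \<le> m" by simp
    then show "x \<in> {..<i}"
      using ps_mono[of "Suc i" "Suc x" \<beta>] m by (cases "x < i") auto
  next
    fix x assume "x \<in> {..<i}"
    then show "x \<in> {i'. i' < length \<beta> \<and> partial_sum \<beta> (Suc i') \<le> m}"
      using ps_mono[of "Suc x" i \<beta>] m i by auto
  qed
  then show ?thesis by (simp add: blk_def)
qed

lemma blk_ex: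
  assumes m: "m < sum_list \<beta>"
  shows "\<exists>i < length \<beta>. partial_sum \<beta> i \<le> m \<and> m < partial_sum \<beta> (Suc i)"
proof -
  have ne: "\<beta> \<noteq> []" using m by auto
  define P where "P j \<longleftrightarrow> m < partial_sum \<beta> (Suc j)" for j
  have "P (length \<beta> - 1)" using m ne by (simp add: P_def ps_ge_len)
  define i where "i = (LEAST j. P j)"
  have Pi: "P i" unfolding i_def by (rule LeastI) fact
  have ile: "i \<le> length \<beta> - 1" unfolding i_def by (rule Least_le) fact
  have "partial_sum \<beta> i \<le> m"
  proof (cases i)
    case 0 then show ?thesis by (simp add: partial_sum_def)
  next
    case (Suc k)
    then have "\<not> P k" using not_less_Least[of k P] unfolding i_def[symmetric] by simp
    then show ?thesis using Suc by (simp add: P_def)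
  qed
  moreover have "i < length \<beta>" using ile ne by (cases \<beta>) auto
  ultimately show ?thesis using Pi P_def by blast
qed

lemma blk_props:
  assumes "\<forall>b\<in>set \<beta>. 0 < b" "m < sum_list \<beta>"
  shows "blk \<beta> m < length \<beta> \<and> partial_sum \<beta> (blk \<beta> m) \<le> m \<and> m < partial_sum \<beta> (Suc (blk \<beta> m))"
  using blk_ex[OF assms(2)] blk_char[OF assms(1)] by metis

lemma blk_mono: "m \<le> m' \<Longrightarrow> blk \<beta> m \<le> blk \<beta> m'"
  unfolding blk_def by (rule card_mono) auto

definition idx :: "nat list \<Rightarrow> nat \<Rightarrow> nat" where
  "idx qs v = (THE m. m < length qs \<and> qs ! m = v)"

lemma idx_nth: "distinct qs \<Longrightarrow> m < length qs \<Longrightarrow> idx qs (qs ! m) = m"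
  unfolding idx_def by (rule the_equality) (auto simp: nth_eq_iff_index_eq)

locale pos = 
  fixes V :: "nat set" and prec :: "nat \<Rightarrow> nat \<Rightarrow> bool"
  assumes fin: "finite V"
    and irr: "\<forall>x \<in> V. \<not> prec x x"
    and trn: "\<forall>x \<in> V. \<forall>y \<in> V. \<forall>z \<in> V. prec x y \<and> prec y z \<longrightarrow> prec x z"
begin

abbreviation "E \<equiv> poset_digraph V prec"
abbreviation "adj \<equiv> incomparability_graph V prec"

lemma asym: "x \<in> V \<Longrightarrow> y \<in> V \<Longrightarrow> prec x y \<Longrightarrow> \<not> prec y x"
  using irr trn by blast

end

locale trip = pos +
  fixes qs \<beta> "is" :: "nat list"
  assumes dist: "distinct qs" and setq: "set qs = V"
    and sumb: "sum_list \<beta> = card V" and posb: "\<forall>b\<in>set \<beta>. 0 < b"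
    and cover: "is_ordered_path_cover E qs \<beta>"
    and leni: "length is = length \<beta>" and sorti: "sorted_wrt (<) is"
    and posi: "\<forall>j\<in>set is. 0 < j"
begin

abbreviation "n \<equiv> card V"

lemma lenq: "length qs = n"
  using dist setq distinct_card by fastforce

definition col where "col m = is ! blk \<beta> m"
definition kap where "kap v = (if v \<in> V then col (idx qs v) else 0)"

lemma inV: "m < n \<Longrightarrow> qs ! m \<in> V"
  using lenq setq nth_mem by fastforce

lemma kap_nth: "m < n \<Longrightarrow> kap (qs ! m) = col m"
  using inV idx_nth[OF dist] lenq by (simp add: kap_def)

lemma V_img: "V = (!) qs ` {..<n}"
  using setq lenq by (auto simp: set_conv_nth)

lemma obtV: "v \<in> V \<Longrightarrow> \<exists>m<n. v = qs ! m"
  using V_img by auto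

lemma inj_q: "inj_on ((!) qs) {..<n}"
  using dist lenq by (auto simp: inj_on_def nth_eq_iff_index_eq)

lemma bp: "m < n \<Longrightarrow> blk \<beta> m < length \<beta> \<and> partial_sum \<beta> (blk \<beta> m) \<le> m \<and> m < partial_sum \<beta> (Suc (blk \<beta> m))"
  using blk_props[OF posb, of m] sumb by simp

lemma path_aux:
  assumes i: "i < length \<beta>" and a: "partial_sum \<beta> i \<le> a"
  shows "a < k \<Longrightarrow> k < partial_sum \<beta> (Suc i) \<Longrightarrow> prec (qs ! k) (qs ! a)"
proof (induction k)
  case 0 then show ?case by simp
next
  case (Suc k)
  have kn: "Suc k < n" using Suc ps_le_sum[of \<beta> "Suc i"] sumb by simp
  have e: "E (qs ! k) (qs ! Suc k)"
    using cover i a Suc unfolding is_ordered_path_cover_def by auto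
  then have p1: "prec (qs ! Suc k) (qs ! k)" by (simp add: poset_digraph_def)
  show ?case
  proof (cases "a = k")
    case True then show ?thesis using p1 by simp
  next
    case False
    then have "prec (qs ! k) (qs ! a)" using Suc by simp
    then show ?thesis using p1 trn inV kn by (meson Suc.prems(1) Suc_lessD less_trans_Suc)
  qed
qed

lemma same_blk_prec:
  assumes "a < b" "b < n" "blk \<beta> a = blk \<beta> b"
  shows "prec (qs ! b) (qs ! a)"
  using path_aux[of "blk \<beta> a" a b] bp[of a] bp[of b] assms by simp

lemma disti: "distinct is"
  using sorti strict_sorted_iff by blast

lemma col_less: "a < n \<Longrightarrow> b < n \<Longrightarrow> col a < col b \<longleftrightarrow> blk \<beta> a < blk \<beta> b"
  unfolding col_def using bp[of a] bp[of b] leni sorti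
  by (metis linorder_neqE_nat not_less_iff_gr_or_eq sorted_wrt_nth_less)

lemma col_eq: "a < n \<Longrightarrow> b < n \<Longrightarrow> col a = col b \<longleftrightarrow> blk \<beta> a = blk \<beta> b"
  unfolding col_def using bp[of a] bp[of b] leni disti
  by (simp add: nth_eq_iff_index_eq)

lemma comparable_same:
  assumes "a < n" "b < n" "a \<noteq> b" "col a = col b"
  shows "prec (qs ! a) (qs ! b) \<or> prec (qs ! b) (qs ! a)"
  using assms same_blk_prec col_eq by (metis linorder_neqE_nat)

lemma less_iff:
  assumes "a < n" "b < n" "\<not> prec (qs ! a) (qs ! b)" "\<not> prec (qs ! b) (qs ! a)"
  shows "a < b \<longleftrightarrow> col a < col b"
  using assms comparable_same col_less col_eq blk_mono
  by (metis le_eq_less_or_eq linorder_not_le)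


lemma col_in: "m < n \<Longrightarrow> col m \<in> set is"
  using bp[of m] leni by (simp add: col_def)

lemma kap_proper: "kap \<in> proper_colorings V adj"
  unfolding proper_colorings_def
proof (intro CollectI conjI ballI allI impI)
  fix v assume "v \<in> V"
  then obtain m where m: "m < n" "v = qs ! m" using obtV by blast
  then show "0 < kap v" using kap_nth col_in posi by simp
next
  fix v :: nat assume "v \<notin> V" then show "kap v = 0" by (simp add: kap_def)
next
  fix u v assume "u \<in> V" "v \<in> V" "adj u v"
  then obtain a b where ab: "a < n" "b < n" "u = qs ! a" "v = qs ! b" using obtV by metis
  have "a \<noteq> b" "\<not> prec u v" "\<not> prec v u"
    using \<open>adj u v\<close> ab by (auto simp: incomparability_graph_def)
  then show "kap u \<noteq> kap v" using comparable_same ab kap_nth by metis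
qed

lemma card_V_filter: "card {v \<in> V. P v} = card {m. m < n \<and> P (qs ! m)}"
proof -
  have "{v \<in> V. P v} = (!) qs ` {m. m < n \<and> P (qs ! m)}" using V_img by auto
  moreover have "inj_on ((!) qs) {m. m < n \<and> P (qs ! m)}" using inj_q by (rule inj_on_subset) auto
  ultimately show ?thesis by (simp add: card_image)
qed

lemma kap_monomial:
  "col_monomial V kap = (\<lambda>c. \<Sum>j < length \<beta>. if is ! j = c then \<beta> ! j else 0)"
proof
  fix c
  have "col_monomial V kap c = card {m. m < n \<and> col m = c}"
    unfolding col_monomial_def card_V_filter using kap_nth by (metis (lifting))
  also have "\<dots> = (\<Sum>j < length \<beta>. if is ! j = c then \<beta> ! j else 0)"
  proof (cases "c \<in> set is")
    case True
    then obtain j where j: "j < length \<beta>" "c = is ! j" using leni by (auto simp: in_set_conv_nth)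
    have "{m. m < n \<and> col m = c} = {partial_sum \<beta> j..<partial_sum \<beta> (Suc j)}"
    proof (intro set_eqI iffI)
      fix m assume "m \<in> {m. m < n \<and> col m = c}"
      then have "m < n" "blk \<beta> m = j" unfolding col_def using j bp[of m] leni disti
        by (auto simp: nth_eq_iff_index_eq)
      then show "m \<in> {partial_sum \<beta> j..<partial_sum \<beta> (Suc j)}" using bp[of m] by auto
    next
      fix m assume "m \<in> {partial_sum \<beta> j..<partial_sum \<beta> (Suc j)}"
      moreover have "partial_sum \<beta> (Suc j) \<le> n" using ps_le_sum sumb by metis
      ultimately show "m \<in> {m. m < n \<and> col m = c}"
        using blk_char[OF posb j(1)] j by (auto simp: col_def)
    qed
    then have "card {m. m < n \<and> col m = c} = \<beta> ! j" using ps_Suc[OF j(1)] by simp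
    moreover have "(\<Sum>j' < length \<beta>. if is ! j' = c then \<beta> ! j' else 0)
        = (\<Sum>j' < length \<beta>. if j' = j then \<beta> ! j' else 0)"
      using j leni disti by (intro sum.cong) (auto simp: nth_eq_iff_index_eq)
    ultimately show ?thesis using j by simp
  next
    case False
    then have "{m. m < n \<and> col m = c} = {}" using col_in by auto
    moreover have "(\<Sum>j' < length \<beta>. if is ! j' = c then \<beta> ! j' else 0) = 0"
      using False leni by (intro sum.neutral) auto
    ultimately show ?thesis by simp
  qed
  finally show "col_monomial V kap c = (\<Sum>j < length \<beta>. if is ! j = c then \<beta> ! j else 0)" .
qed

lemma kap_asc_key:
  assumes h: "u \<in> V" "v \<in> V" "u < v"
  shows "((E u v \<longleftrightarrow> E v u) \<and> (\<exists>i j. i < j \<and> j < length qs \<and> qs ! i = u \<and> qs ! j = v))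
     \<longleftrightarrow> (adj u v \<and> kap u < kap v)"
proof -
  obtain a b where ab: "a < n" "b < n" "u = qs ! a" "v = qs ! b" using obtV h by metis
  have ex: "(\<exists>i j. i < j \<and> j < length qs \<and> qs ! i = u \<and> qs ! j = v) \<longleftrightarrow> a < b"
  proof
    assume "\<exists>i j. i < j \<and> j < length qs \<and> qs ! i = u \<and> qs ! j = v"
    then obtain i j where "i < j" "j < length qs" "qs ! i = u" "qs ! j = v" by blast
    moreover have "i = a" "j = b" using ab calculation lenq dist
      by (auto simp: nth_eq_iff_index_eq)
    ultimately show "a < b" by simp
  next
    assume "a < b" then show "\<exists>i j. i < j \<and> j < length qs \<and> qs ! i = u \<and> qs ! j = v"
      using ab lenq by auto
  qed
  have e1: "(E u v \<longleftrightarrow> E v u) \<longleftrightarrow> (\<not> prec u v \<and> \<not> prec v u)"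
    using asym h by (auto simp: poset_digraph_def)
  have e2: "adj u v \<longleftrightarrow> (\<not> prec u v \<and> \<not> prec v u)"
    using h by (auto simp: incomparability_graph_def)
  show ?thesis
    unfolding e1 e2 ex using less_iff[of a b] ab kap_nth by auto
qed

lemma kap_asc: "seq_asc V E qs = col_asc V adj kap"
proof -
  have "{(u, v). u \<in> V \<and> v \<in> V \<and> (E u v \<longleftrightarrow> E v u) \<and> u < v \<and>
       (\<exists>i j. i < j \<and> j < length qs \<and> qs ! i = u \<and> qs ! j = v)}
      = {(u, v). u \<in> V \<and> v \<in> V \<and> adj u v \<and> u < v \<and> kap u < kap v}"
    using kap_asc_key by blast
  then show ?thesis unfolding seq_asc_def col_asc_def by simp
qed

lemma rank_key:
  assumes a: "a < n" and b: "b < n"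
  shows "(col a < col b \<or> (col a = col b \<and> prec (qs ! b) (qs ! a))) \<longleftrightarrow> a < b"
proof
  assume h: "col a < col b \<or> (col a = col b \<and> prec (qs ! b) (qs ! a))"
  show "a < b"
  proof (cases "col a < col b")
    case True
    then have "blk \<beta> a < blk \<beta> b" using col_less a b by simp
    then show ?thesis using blk_mono[of b a \<beta>] by (cases "a < b") auto
  next
    case False
    then have ce: "col a = col b" and p: "prec (qs ! b) (qs ! a)" using h by auto
    have "a \<noteq> b" using irr inV[OF b] p by auto
    moreover have "\<not> b < a"
    proof
      assume "b < a"
      then have "prec (qs ! a) (qs ! b)" using same_blk_prec[of b a] a col_eq[OF a b] ce by simp
      then show False using asym[OF inV[OF b] inV[OF a]] p by blast
    qed
    ultimately show ?thesis by simp
  qed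
next
  assume ab: "a < b"
  show "col a < col b \<or> (col a = col b \<and> prec (qs ! b) (qs ! a))"
  proof (cases "blk \<beta> a = blk \<beta> b")
    case True then show ?thesis using same_blk_prec[OF ab b] col_eq[OF a b] by simp
  next
    case False
    then have "blk \<beta> a < blk \<beta> b" using blk_mono[of a b \<beta>] ab by simp
    then show ?thesis using col_less[OF a b] by simp
  qed
qed

lemma rank:
  assumes b: "b < n"
  shows "card {u \<in> V. kap u < kap (qs ! b) \<or> (kap u = kap (qs ! b) \<and> prec (qs ! b) u)} = b"
proof -
  have "{m. m < n \<and> (kap (qs ! m) < kap (qs ! b) \<or> (kap (qs ! m) = kap (qs ! b) \<and> prec (qs ! b) (qs ! m)))}
      = {..<b}"
  proof (intro set_eqI)
    fix a
    show "a \<in> {m. m < n \<and> (kap (qs ! m) < kap (qs ! b) \<or> (kap (qs ! m) = kap (qs ! b) \<and> prec (qs ! b) (qs ! m)))}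
       \<longleftrightarrow> a \<in> {..<b}"
    proof (cases "a < n")
      case True
      then show ?thesis using rank_key[OF True b] kap_nth[OF True] kap_nth[OF b] by simp
    next
      case False then show ?thesis using b by simp
    qed
  qed
  then show ?thesis unfolding card_V_filter by simp
qed

end




lemma card_fibers:
  assumes "finite V" "finite A"
  shows "card {v \<in> V. (k::nat\<Rightarrow>nat) v \<in> A} = (\<Sum>c\<in>A. card {v \<in> V. k v = c})"
proof -
  have "{v \<in> V. k v \<in> A} = (\<Union>c\<in>A. {v \<in> V. k v = c})" by auto
  moreover have "card (\<Union>c\<in>A. {v \<in> V. k v = c}) = (\<Sum>c\<in>A. card {v \<in> V. k v = c})"
    using assms by (intro card_UN_disjoint) auto
  ultimately show ?thesis by simp
qed

lemma set_take_sorted: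
  assumes "sorted_wrt (<) (xs :: nat list)" "j < length xs"
  shows "set (take j xs) = {x \<in> set xs. x < xs ! j}"
proof (intro set_eqI iffI)
  fix x assume "x \<in> set (take j xs)"
  then obtain k where k: "k < j" "x = xs ! k" using assms(2)
    by (auto simp: in_set_conv_nth)
  then show "x \<in> {x \<in> set xs. x < xs ! j}" using assms sorted_wrt_nth_less[OF assms(1) k(1) assms(2)] by auto
next
  fix x assume "x \<in> {x \<in> set xs. x < xs ! j}"
  then obtain k where k: "k < length xs" "x = xs ! k" "xs ! k < xs ! j" by (auto simp: in_set_conv_nth)
  have "k < j"
  proof (rule ccontr)
    assume "\<not> k < j"
    then have "j \<le> k" by simp
    then have "xs ! j \<le> xs ! k" using assms k
      by (metis le_eq_less_or_eq order_less_imp_le sorted_wrt_nth_less)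
    then show False using k by simp
  qed
  then show "x \<in> set (take j xs)" using k assms(2) by (auto simp: in_set_conv_nth intro!: exI[of _ k])
qed

locale colr = pos +
  fixes \<kappa> :: "nat \<Rightarrow> nat"
  assumes kprp: "\<kappa> \<in> proper_colorings V adj"
begin

abbreviation "n \<equiv> card V"

lemma kpos: "v \<in> V \<Longrightarrow> 0 < \<kappa> v" and kout: "v \<notin> V \<Longrightarrow> \<kappa> v = 0"
  and kprop: "u \<in> V \<Longrightarrow> v \<in> V \<Longrightarrow> adj u v \<Longrightarrow> \<kappa> u \<noteq> \<kappa> v"
  using kprp by (auto simp: proper_colorings_def)

definition rel where "rel u v \<longleftrightarrow> \<kappa> u < \<kappa> v \<or> (\<kappa> u = \<kappa> v \<and> prec v u)"
definition R where "R v = card {u \<in> V. rel u v}"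

lemma rel_total: "u \<in> V \<Longrightarrow> v \<in> V \<Longrightarrow> u \<noteq> v \<Longrightarrow> rel u v \<or> rel v u"
proof -
  assume h: "u \<in> V" "v \<in> V" "u \<noteq> v"
  show "rel u v \<or> rel v u"
  proof (cases "\<kappa> u = \<kappa> v")
    case True
    then have "\<not> adj u v" using kprop h by blast
    then have "prec u v \<or> prec v u" using h by (auto simp: incomparability_graph_def)
    then show ?thesis using True by (auto simp: rel_def)
  next
    case False then show ?thesis by (auto simp: rel_def)
  qed
qed

lemma rel_irr: "v \<in> V \<Longrightarrow> \<not> rel v v"
  using irr by (auto simp: rel_def)

lemma rel_trans: "u \<in> V \<Longrightarrow> v \<in> V \<Longrightarrow> w \<in> V \<Longrightarrow> rel u v \<Longrightarrow> rel v w \<Longrightarrow> rel u w"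
  using trn unfolding rel_def by (metis order.strict_trans order.strict_trans1 order.strict_trans2)

lemma R_less: assumes "u \<in> V" "v \<in> V" "rel u v" shows "R u < R v"
proof -
  have "{w \<in> V. rel w u} \<subset> {w \<in> V. rel w v}"
    using assms rel_trans rel_irr by blast
  then show ?thesis unfolding R_def using fin by (intro psubset_card_mono) auto
qed

lemma R_bound: "v \<in> V \<Longrightarrow> R v < n"
proof -
  assume v: "v \<in> V"
  have "{u \<in> V. rel u v} \<subset> V" using v rel_irr by blast
  then show ?thesis unfolding R_def using fin by (intro psubset_card_mono) auto
qed

lemma R_inj: "inj_on R V"
  unfolding inj_on_def using rel_total R_less by (metis less_irrefl)

lemma R_img: "R ` V = {..<n}"
proof -
  have "R ` V \<subseteq> {..<n}" using R_bound by auto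
  moreover have "card (R ` V) = card {..<n}" using card_image[OF R_inj] by simp
  ultimately show ?thesis by (intro card_subset_eq) auto
qed

definition qn where "qn m = (THE v. v \<in> V \<and> R v = m)"

lemma qn: assumes "m < n" shows "qn m \<in> V \<and> R (qn m) = m"
proof -
  obtain v where v: "v \<in> V" "R v = m" using R_img assms by (metis imageE lessThan_iff)
  have "qn m = v" unfolding qn_def
    using v R_inj by (intro the_equality) (auto simp: inj_on_def)
  then show ?thesis using v by simp
qed

lemma qn_R: "v \<in> V \<Longrightarrow> qn (R v) = v"
  using qn[OF R_bound] R_inj by (metis inj_onD)

definition "qs = map qn [0..<n]"
definition "is = sorted_list_of_set (\<kappa> ` V)"
definition "\<beta> = map (\<lambda>c. card {v \<in> V. \<kappa> v = c}) is"

lemma lenq: "length qs = n" by (simp add: qs_def)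
lemma qs_nth: "m < n \<Longrightarrow> qs ! m = qn m" by (simp add: qs_def)

lemma dist: "distinct qs"
  unfolding distinct_conv_nth lenq using qs_nth qn by metis

lemma setq: "set qs = V"
proof
  show "set qs \<subseteq> V" using qn by (auto simp: qs_def)
  show "V \<subseteq> set qs"
  proof
    fix v assume "v \<in> V"
    then show "v \<in> set qs" using R_bound qn_R by (force simp: qs_def)
  qed
qed

lemma sorti: "sorted_wrt (<) is" and setis: "set is = \<kappa> ` V" and disti: "distinct is"
  using fin by (auto simp: is_def)

lemma leni: "length is = length \<beta>" by (simp add: \<beta>_def)

lemma posi: "\<forall>j\<in>set is. 0 < j" using setis kpos by auto

lemma posb: "\<forall>b\<in>set \<beta>. 0 < b"
proof
  fix b assume "b \<in> set \<beta>"
  then obtain v where v: "v \<in> V" "b = card {u \<in> V. \<kappa> u = \<kappa> v}" using setis by (auto simp: \<beta>_def)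
  then have "v \<in> {u \<in> V. \<kappa> u = \<kappa> v}" by simp
  then show "0 < b" using v fin by (metis (no_types, lifting) card_gt_0_iff empty_iff finite_subset mem_Collect_eq subsetI)
qed

lemma ps_card: "partial_sum \<beta> j = card {v \<in> V. \<kappa> v \<in> set (take j is)}"
proof -
  have "partial_sum \<beta> j = sum_list (map (\<lambda>c. card {v \<in> V. \<kappa> v = c}) (take j is))"
    by (simp add: partial_sum_def \<beta>_def take_map)
  also have "\<dots> = (\<Sum>c\<in>set (take j is). card {v \<in> V. \<kappa> v = c})"
    using disti by (simp add: sum_list_distinct_conv_sum_set)
  also have "\<dots> = card {v \<in> V. \<kappa> v \<in> set (take j is)}"
    using card_fibers fin by simp
  finally show ?thesis .
qed

lemma sumb: "sum_list \<beta> = n"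
proof -
  have "sum_list \<beta> = partial_sum \<beta> (length \<beta>)" by (simp add: partial_sum_def)
  also have "\<dots> = card {v \<in> V. \<kappa> v \<in> set is}" using leni ps_card by simp
  also have "\<dots> = n" using setis by (metis (mono_tags, lifting) Collect_cong Collect_mem_eq image_eqI)
  finally show ?thesis .
qed

lemma ps_j: "j < length is \<Longrightarrow> partial_sum \<beta> j = card {v \<in> V. \<kappa> v < is ! j}"
  unfolding ps_card using set_take_sorted[OF sorti] setis
  by (metis (no_types, lifting) Collect_cong image_eqI mem_Collect_eq)

lemma key:
  assumes m: "m < n"
  shows "blk \<beta> m < length \<beta> \<and> is ! blk \<beta> m = \<kappa> (qs ! m)"
proof -
  define v where "v = qs ! m"
  have v: "v \<in> V" "R v = m" using qn[OF m] qs_nth[OF m] v_def by auto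
  have "\<kappa> v \<in> set is" using setis v by auto
  then obtain j where j: "j < length is" "is ! j = \<kappa> v" by (auto simp: in_set_conv_nth)
  let ?L = "{u \<in> V. \<kappa> u < \<kappa> v}" and ?C = "{u \<in> V. \<kappa> u = \<kappa> v}"
  have ps1: "partial_sum \<beta> j = card ?L" using ps_j j by simp
  have bj: "\<beta> ! j = card ?C" using j by (simp add: \<beta>_def)
  have ps2: "partial_sum \<beta> (Suc j) = card ?L + card ?C" using ps_Suc[of j \<beta>] j leni ps1 bj by simp
  have sub1: "?L \<subseteq> {u \<in> V. rel u v}" by (auto simp: rel_def)
  have sub2: "{u \<in> V. rel u v} \<subseteq> ?L \<union> (?C - {v})" using rel_irr v by (auto simp: rel_def)
  have "card ?L \<le> m" using card_mono[OF _ sub1] fin v by (simp add: R_def)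
  moreover have "m \<le> card ?L + card (?C - {v})"
    using card_mono[OF _ sub2] fin v card_Un_le[of ?L "?C - {v}"] by (simp add: R_def)
  moreover have "card (?C - {v}) < card ?C" using v fin by (intro psubset_card_mono) auto
  ultimately have "partial_sum \<beta> j \<le> m" "m < partial_sum \<beta> (Suc j)" using ps1 ps2 by auto
  then have "blk \<beta> m = j" using blk_char[OF posb] j leni by simp
  then show ?thesis using j leni v_def by simp
qed

lemma cover: "is_ordered_path_cover E qs \<beta>"
  unfolding is_ordered_path_cover_def
proof (intro allI impI)
  fix i m assume h: "i < length \<beta>" "partial_sum \<beta> i \<le> m \<and> Suc m < partial_sum \<beta> (Suc i)"
  have sm: "Suc m < n" using h ps_le_sum[of \<beta> "Suc i"] sumb by simp
  have b1: "blk \<beta> m = i" "blk \<beta> (Suc m) = i" using blk_char[OF posb h(1)] h by auto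
  have ce: "\<kappa> (qs ! m) = \<kappa> (qs ! Suc m)" using key[of m] key[of "Suc m"] sm b1 by simp
  have inV: "qs ! m \<in> V" "qs ! Suc m \<in> V" using qn qs_nth sm by auto
  have Rs: "R (qs ! m) = m" "R (qs ! Suc m) = Suc m" using qn qs_nth sm by auto
  have "qs ! m \<noteq> qs ! Suc m" using Rs by auto
  then have "rel (qs ! m) (qs ! Suc m)" using rel_total inV R_less Rs by (metis lessI not_less_iff_gr_or_eq)
  then have "prec (qs ! Suc m) (qs ! m)" using ce by (simp add: rel_def)
  then show "E (qs ! m) (qs ! Suc m)" using inV by (simp add: poset_digraph_def)
qed

lemma is_trip: "trip V prec qs \<beta> is"
  by (unfold_locales) (use dist setq sumb posb cover leni sorti posi in auto)

lemma kap_eq: "trip.kap V qs \<beta> is = \<kappa>"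
proof
  fix v
  interpret t: trip V prec qs \<beta> "is" by (rule is_trip)
  show "t.kap v = \<kappa> v"
  proof (cases "v \<in> V")
    case True
    then obtain m where m: "m < n" "v = qs ! m" using t.obtV by blast
    then show ?thesis using t.kap_nth key unfolding t.col_def by simp
  next
    case False then show ?thesis using kout by (simp add: t.kap_def)
  qed
qed

end




definition Sset :: "nat list \<Rightarrow> (nat \<Rightarrow> nat) \<Rightarrow> nat list set" where
  "Sset \<beta> \<alpha> = {is :: nat list. length is = length \<beta> \<and> sorted_wrt (<) is \<and>
       (\<forall>j \<in> set is. 0 < j) \<and>
       \<alpha> = (\<lambda>c. \<Sum>j < length \<beta>. if is ! j = c then \<beta> ! j else 0)}"

lemma M_coeff_Sset: "M_coeff \<beta> \<alpha> = card (Sset \<beta> \<alpha>)"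
  by (simp add: M_coeff_def Sset_def)

lemma Sset_beta:
  assumes "is \<in> Sset \<beta> \<alpha>" "j < length \<beta>"
  shows "\<alpha> (is ! j) = \<beta> ! j"
proof -
  have d: "distinct is" and l: "length is = length \<beta>" using assms strict_sorted_iff by (auto simp: Sset_def)
  have "\<alpha> (is ! j) = (\<Sum>j' < length \<beta>. if is ! j' = is ! j then \<beta> ! j' else 0)"
    using assms(1) by (simp add: Sset_def)
  also have "\<dots> = (\<Sum>j' < length \<beta>. if j' = j then \<beta> ! j' else 0)"
    using d l assms(2) by (intro sum.cong) (auto simp: nth_eq_iff_index_eq)
  finally show ?thesis using assms(2) by simp
qed

lemma Sset_set:
  assumes "is \<in> Sset \<beta> \<alpha>" "\<forall>b\<in>set \<beta>. 0 < b"
  shows "set is = {c. \<alpha> c \<noteq> 0}"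
proof (intro set_eqI iffI)
  fix c assume "c \<in> set is"
  then obtain j where j: "j < length \<beta>" "c = is ! j" using assms by (auto simp: Sset_def in_set_conv_nth)
  then show "c \<in> {c. \<alpha> c \<noteq> 0}" using Sset_beta[OF assms(1) j(1)] assms(2) by auto
next
  fix c assume "c \<in> {c. \<alpha> c \<noteq> 0}"
  moreover have "c \<notin> set is \<Longrightarrow> \<alpha> c = 0"
    using assms(1) by (auto simp: Sset_def in_set_conv_nth intro!: sum.neutral)
  ultimately show "c \<in> set is" by auto
qed

lemma Sset_uniq:
  assumes "is1 \<in> Sset \<beta>1 \<alpha>" "\<forall>b\<in>set \<beta>1. 0 < b" "is2 \<in> Sset \<beta>2 \<alpha>" "\<forall>b\<in>set \<beta>2. 0 < b"
  shows "is1 = is2"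
proof -
  have "sorted_wrt (<) is1" "sorted_wrt (<) is2" using assms(1,3) by (simp_all add: Sset_def)
  moreover have "set is1 = set is2" using Sset_set[OF assms(1,2)] Sset_set[OF assms(3,4)] by simp
  ultimately show ?thesis using strict_sorted_equal[of is2 is1] by simp
qed

lemma Sset_finite: "\<forall>b\<in>set \<beta>. 0 < b \<Longrightarrow> finite (Sset \<beta> \<alpha>)"
proof (cases "Sset \<beta> \<alpha> = {}")
  case False
  assume p: "\<forall>b\<in>set \<beta>. 0 < b"
  then obtain x where x: "x \<in> Sset \<beta> \<alpha>" using False by auto
  have "Sset \<beta> \<alpha> \<subseteq> {x}"
  proof
    fix y assume "y \<in> Sset \<beta> \<alpha>"
    then have "y = x" by (rule Sset_uniq[OF _ p x p])
    then show "y \<in> {x}" by simp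
  qed
  then show ?thesis using finite_subset by blast
qed simp

lemma len_le_sum: "\<forall>b\<in>set (\<beta>::nat list). 0 < b \<Longrightarrow> length \<beta> \<le> sum_list \<beta>"
  by (induction \<beta>) auto

lemma finite_seq: "finite V \<Longrightarrow> finite (sequencings V)"
proof -
  assume f: "finite V"
  have "sequencings V \<subseteq> {xs. set xs \<subseteq> V \<and> length xs \<le> card V}"
    by (auto simp: sequencings_def distinct_card)
  then show ?thesis using finite_lists_length_le[OF f] finite_subset by blast
qed

lemma finite_comp: "finite (compositions n)"
proof -
  have "compositions n \<subseteq> {xs. set xs \<subseteq> {..n} \<and> length xs \<le> n}"
  proof
    fix xs assume "xs \<in> compositions n"
    then have "sum_list xs = n" "\<forall>b\<in>set xs. 0 < b" by (auto simp: compositions_def)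
    then show "xs \<in> {xs. set xs \<subseteq> {..n} \<and> length xs \<le> n}"
      using len_le_sum member_le_sum_list by fastforce
  qed
  then show ?thesis using finite_lists_length_le[of "{..n}" n] finite_subset by blast
qed

context pos
begin

definition "Tset \<alpha> = Sigma (ordered_path_covers V E) (\<lambda>(qs, \<beta>). Sset \<beta> \<alpha>)"
definition "Cset \<alpha> = {\<kappa> \<in> proper_colorings V adj. col_monomial V \<kappa> = \<alpha>}"
definition "F t = (case t of ((qs, \<beta>), is) \<Rightarrow> trip.kap V qs \<beta> is)"

lemma T_iff: "((qs, \<beta>), is) \<in> Tset \<alpha> \<longleftrightarrow> trip V prec qs \<beta> is \<and> is \<in> Sset \<beta> \<alpha>"
proof
  assume h: "((qs, \<beta>), is) \<in> Tset \<alpha>"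
  then have h1: "(qs, \<beta>) \<in> ordered_path_covers V E" and h2: "is \<in> Sset \<beta> \<alpha>"
    unfolding Tset_def by auto
  have a: "distinct qs" "set qs = V" "sum_list \<beta> = card V" "\<forall>b\<in>set \<beta>. 0 < b"
    "is_ordered_path_cover E qs \<beta>"
    using h1 unfolding ordered_path_covers_def sequencings_def compositions_def by auto
  have b: "length is = length \<beta>" "sorted_wrt (<) is" "\<forall>j\<in>set is. 0 < j"
    using h2 unfolding Sset_def by auto
  have "trip V prec qs \<beta> is"
    by (rule trip.intro, rule pos_axioms, unfold_locales) (fact a b)+
  then show "trip V prec qs \<beta> is \<and> is \<in> Sset \<beta> \<alpha>" using h2 by simp
next
  assume h: "trip V prec qs \<beta> is \<and> is \<in> Sset \<beta> \<alpha>"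
  then interpret t: trip V prec qs \<beta> "is" by simp
  have "(qs, \<beta>) \<in> ordered_path_covers V E" using t.dist t.setq t.sumb t.posb t.cover
    unfolding ordered_path_covers_def sequencings_def compositions_def by auto
  then show "((qs, \<beta>), is) \<in> Tset \<alpha>" using h unfolding Tset_def by auto
qed

lemma finite_OPC: "finite (ordered_path_covers V E)"
proof -
  have "ordered_path_covers V E \<subseteq> sequencings V \<times> compositions (card V)"
    by (auto simp: ordered_path_covers_def)
  then show ?thesis using finite_seq[OF fin] finite_comp finite_subset by blast
qed

lemma F_bij: "bij_betw F (Tset \<alpha>) (Cset \<alpha>)"
proof (rule bij_betw_imageI)
  show "inj_on F (Tset \<alpha>)"
  proof (rule inj_onI)
    fix t1 t2 assume t1: "t1 \<in> Tset \<alpha>" and t2: "t2 \<in> Tset \<alpha>" and eq: "F t1 = F t2"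
    obtain qs1 \<beta>1 is1 where e1: "t1 = ((qs1, \<beta>1), is1)" by (metis prod.collapse)
    obtain qs2 \<beta>2 is2 where e2: "t2 = ((qs2, \<beta>2), is2)" by (metis prod.collapse)
    have h1: "trip V prec qs1 \<beta>1 is1" "is1 \<in> Sset \<beta>1 \<alpha>" using t1 e1 T_iff by auto
    have h2: "trip V prec qs2 \<beta>2 is2" "is2 \<in> Sset \<beta>2 \<alpha>" using t2 e2 T_iff by auto
    interpret a: trip V prec qs1 \<beta>1 is1 by (rule h1)
    interpret b: trip V prec qs2 \<beta>2 is2 by (rule h2)
    have ieq: "is1 = is2" using Sset_uniq[OF h1(2) a.posb h2(2) b.posb] .
    have beq: "\<beta>1 = \<beta>2"
    proof (rule nth_equalityI)
      show "length \<beta>1 = length \<beta>2" using a.leni b.leni ieq by simp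
      fix j assume "j < length \<beta>1"
      then show "\<beta>1 ! j = \<beta>2 ! j" using Sset_beta[OF h1(2)] Sset_beta[OF h2(2)] a.leni b.leni ieq
        by (metis)
    qed
    have keq: "a.kap = b.kap" using eq e1 e2 by (simp add: F_def)
    have qeq: "qs1 = qs2"
    proof (rule nth_equalityI)
      show "length qs1 = length qs2" using a.lenq b.lenq by simp
      fix m assume m: "m < length qs1"
      then have mn: "m < card V" using a.lenq by simp
      obtain m' where m': "m' < card V" "qs1 ! m = qs2 ! m'" using b.obtV a.inV[OF mn] by blast
      have "m = m'" using a.rank[OF mn] b.rank[OF m'(1)] keq m'(2) by simp
      then show "qs1 ! m = qs2 ! m" using m' by simp
    qed
    show "t1 = t2" using e1 e2 ieq beq qeq by simp
  qed
next
  show "F ` Tset \<alpha> = Cset \<alpha>"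
  proof
    show "F ` Tset \<alpha> \<subseteq> Cset \<alpha>"
    proof
      fix k assume "k \<in> F ` Tset \<alpha>"
      then obtain qs \<beta> "is" where t: "((qs, \<beta>), is) \<in> Tset \<alpha>" "k = trip.kap V qs \<beta> is"
        by (auto simp: F_def)
      then have h: "trip V prec qs \<beta> is" "is \<in> Sset \<beta> \<alpha>" using T_iff by auto
      interpret a: trip V prec qs \<beta> "is" by (rule h)
      show "k \<in> Cset \<alpha>" using a.kap_proper a.kap_monomial h(2) t(2)
        by (simp add: Cset_def Sset_def)
    qed
  next
    show "Cset \<alpha> \<subseteq> F ` Tset \<alpha>"
    proof
      fix k assume k: "k \<in> Cset \<alpha>"
      interpret c: colr V prec k using k by unfold_locales (simp add: Cset_def)
      interpret a: trip V prec c.qs c.\<beta> c.is by (rule c.is_trip)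
      have "c.is \<in> Sset c.\<beta> \<alpha>"
        using a.leni a.sorti a.posi a.kap_monomial c.kap_eq k by (simp add: Sset_def Cset_def)
      then have "((c.qs, c.\<beta>), c.is) \<in> Tset \<alpha>" using T_iff c.is_trip by simp
      moreover have "F ((c.qs, c.\<beta>), c.is) = k" using c.kap_eq by (simp add: F_def)
      ultimately show "k \<in> F ` Tset \<alpha>" by (metis image_eqI)
    qed
  qed
qed

lemma main: "Xi_coeff V E \<alpha> = X_coeff V adj \<alpha>"
proof -
  have "Xi_coeff V E \<alpha> = (\<Sum>p \<in> ordered_path_covers V E.
           \<Sum>is \<in> Sset (snd p) \<alpha>. (monom 1 (seq_asc V E (fst p)) :: int poly))"
    unfolding Xi_coeff_def M_coeff_Sset by (intro sum.cong) auto
  also have "\<dots> = (\<Sum>t \<in> Tset \<alpha>. (monom 1 (seq_asc V E (fst (fst t))) :: int poly))"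
  proof -
    have fB: "\<forall>p \<in> ordered_path_covers V E. finite (Sset (snd p) \<alpha>)"
    proof
      fix p assume "p \<in> ordered_path_covers V E"
      then have "\<forall>b\<in>set (snd p). 0 < b"
        unfolding ordered_path_covers_def compositions_def by auto
      then show "finite (Sset (snd p) \<alpha>)" by (rule Sset_finite)
    qed
    have TS: "Tset \<alpha> = Sigma (ordered_path_covers V E) (\<lambda>p. Sset (snd p) \<alpha>)"
      unfolding Tset_def by (rule Sigma_cong) auto
    show ?thesis
      unfolding TS
      using sum.Sigma[OF finite_OPC fB, of "\<lambda>p is. (monom 1 (seq_asc V E (fst p)) :: int poly)"]
      by (simp add: split_beta)
  qed
  also have "\<dots> = (\<Sum>t \<in> Tset \<alpha>. (monom 1 (col_asc V adj (F t)) :: int poly))"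
  proof (intro sum.cong refl)
    fix t assume t: "t \<in> Tset \<alpha>"
    obtain qs \<beta> "is" where e: "t = ((qs, \<beta>), is)" by (metis prod.collapse)
    interpret a: trip V prec qs \<beta> "is" using T_iff t e by auto
    show "monom 1 (seq_asc V E (fst (fst t))) = monom 1 (col_asc V adj (F t))"
      using a.kap_asc e by (simp add: F_def)
  qed
  also have "\<dots> = (\<Sum>k \<in> Cset \<alpha>. (monom 1 (col_asc V adj k) :: int poly))"
    by (rule sum.reindex_bij_betw[OF F_bij])
  also have "\<dots> = X_coeff V adj \<alpha>" by (simp add: X_coeff_def Cset_def)
  finally show ?thesis .
qed

end

theorem proposition3p5:
  fixes V :: "nat set" and prec :: "nat \<Rightarrow> nat \<Rightarrow> bool"
  assumes "finite V" and "0 \<notin> V"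
    and "\<forall>x \<in> V. \<not> prec x x"
    and "\<forall>x \<in> V. \<forall>y \<in> V. \<forall>z \<in> V. prec x y \<and> prec y z \<longrightarrow> prec x z"
  shows "\<forall>\<alpha>. Xi_coeff V (poset_digraph V prec) \<alpha> = X_coeff V (incomparability_graph V prec) \<alpha>"
proof
  fix \<alpha>
  interpret pos V prec by (rule pos.intro) (fact assms(1), fact assms(3), fact assms(4))
  show "Xi_coeff V (poset_digraph V prec) \<alpha> = X_coeff V (incomparability_graph V prec) \<alpha>"
    by (rule main)
qed


end
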